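(* If $T$ is a subcubic tree of order $n$, then $\frac{2n}{3}\le \psi(T)\le \frac{4n+2}{5}$. Moreover, both bounds are tight, i.e., each bound is attained with equality by some subcubic trees.
   Context: All graphs are finite, simple and undirected. A subcubic tree is a tree of maximum degree at most $3$. A dissociation set in a graph $G$ is a vertex subset $F$ such that the induced subgraph $G[F]$ has maximum degree at most $1$; the dissociation number $\psi(G)$ is the maximum cardinality of a dissociation set of $G$. *)

theory Defs
  imports Complex_Main
begin

definition simple_graph :: "'a set \<Rightarrow> 'a set set \<Rightarrow> bool" where
  "simple_graph V E \<longleftrightarrow> finite V \<and>
     (\<forall>e\<in>E. \<exists>u v. u \<noteq> v \<and> u \<in> V \<and> v \<in> V \<and> e = {u, v})"

definition adj :: "'a set set \<Rightarrow> 'a \<Rightarrow> 'a \<Rightarrow> bool" where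
  "adj E u v \<longleftrightarrow> u \<noteq> v \<and> {u, v} \<in> E"

definition degree :: "'a set \<Rightarrow> 'a set set \<Rightarrow> 'a \<Rightarrow> nat" where
  "degree V E v = card {u \<in> V. adj E u v}"

definition connected_graph :: "'a set \<Rightarrow> 'a set set \<Rightarrow> bool" where
  "connected_graph V E \<longleftrightarrow>
     (\<forall>u\<in>V. \<forall>v\<in>V. (\<lambda>x y. x \<in> V \<and> y \<in> V \<and> adj E x y)\<^sup>*\<^sup>* u v)"

definition is_cycle :: "'a set \<Rightarrow> 'a set set \<Rightarrow> 'a list \<Rightarrow> bool" where
  "is_cycle V E xs \<longleftrightarrow> length xs \<ge> 3 \<and> distinct xs \<and> set xs \<subseteq> V \<and>
     (\<forall>i. Suc i < length xs \<longrightarrow> adj E (xs ! i) (xs ! Suc i)) \<and>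
     adj E (last xs) (hd xs)"

definition is_tree :: "'a set \<Rightarrow> 'a set set \<Rightarrow> bool" where
  "is_tree V E \<longleftrightarrow> simple_graph V E \<and> V \<noteq> {} \<and> connected_graph V E \<and>
     \<not> (\<exists>xs. is_cycle V E xs)"

definition subcubic_tree :: "'a set \<Rightarrow> 'a set set \<Rightarrow> bool" where
  "subcubic_tree V E \<longleftrightarrow> is_tree V E \<and> (\<forall>v\<in>V. degree V E v \<le> 3)"

definition dissociation_set :: "'a set \<Rightarrow> 'a set set \<Rightarrow> 'a set \<Rightarrow> bool" where
  "dissociation_set V E F \<longleftrightarrow> F \<subseteq> V \<and> (\<forall>v\<in>F. degree F E v \<le> 1)"

definition dissociation_number :: "'a set \<Rightarrow> 'a set set \<Rightarrow> nat" where
  "dissociation_number V E = Max {card F | F. dissociation_set V E F}"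

end

theory Submission
  imports Defs
begin

lemma adj_sym: "adj E u v = adj E v u"
  by (auto simp: adj_def insert_commute)

lemma adj_irrefl: "\<not> adj E u u"
  by (auto simp: adj_def)

lemma cycle_mono: "is_cycle V' E xs \<Longrightarrow> V' \<subseteq> V \<Longrightarrow> is_cycle V E xs"
  by (auto simp: is_cycle_def)

lemma degree_mono: "finite V \<Longrightarrow> V' \<subseteq> V \<Longrightarrow> degree V' E v \<le> degree V E v"
  unfolding degree_def by (rule card_mono) auto

lemma forest_leaf:
  assumes fin: "finite V" and ne: "V \<noteq> {}" and nc: "\<not>(\<exists>xs. is_cycle V E xs)"
  shows "\<exists>v\<in>V. degree V E v \<le> 1"
proof (rule ccontr)
  assume "\<not> ?thesis"
  hence deg: "\<forall>v\<in>V. 2 \<le> degree V E v" by auto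
  define P where "P n \<longleftrightarrow> (\<exists>xs. length xs = n \<and> xs \<noteq> [] \<and> distinct xs \<and> set xs \<subseteq> V \<and>
     (\<forall>i. Suc i < length xs \<longrightarrow> adj E (xs!i) (xs!Suc i)))" for n
  obtain v where v: "v \<in> V" using ne by auto
  have P1: "P 1" unfolding P_def using v by (intro exI[of _ "[v]"]) auto
  have bound: "\<forall>n. P n \<longrightarrow> n \<le> card V"
  proof (intro allI impI)
    fix n assume "P n"
    then obtain xs where "length xs = n" "distinct xs" "set xs \<subseteq> V" unfolding P_def by auto
    then show "n \<le> card V" using card_mono[OF fin] distinct_card by metis
  qed
  obtain n where Pn: "P n" and mx: "\<forall>m. P m \<longrightarrow> m \<le> n"
    using Nat.ex_has_greatest_nat[OF P1 bound] by blast
  then obtain xs where xs: "length xs = n" "xs \<noteq> []" "distinct xs" "set xs \<subseteq> V"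
    and ad: "\<forall>i. Suc i < length xs \<longrightarrow> adj E (xs!i) (xs!Suc i)" unfolding P_def by auto
  define N where "N = {u\<in>V. adj E u (xs!0)}"
  have x0: "xs!0 \<in> V" using xs by (metis nth_mem length_greater_0_conv subsetD)
  have "2 \<le> card N" using deg x0 unfolding N_def degree_def by auto
  moreover have "finite N" using fin unfolding N_def by auto
  ultimately have "card (N - {xs!1}) \<ge> 1"
    by (auto simp: card_Diff_singleton_if)
  then obtain y where y: "y \<in> N" "y \<noteq> xs!1"
  proof -
    have "N - {xs!1} \<noteq> {}" using \<open>card (N - {xs!1}) \<ge> 1\<close> by (metis card.empty not_one_le_zero)
    then show ?thesis using that by blast
  qed
  show False
  proof (cases "y \<in> set xs")
    case False
    have "P (Suc n)" unfolding P_def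
    proof (intro exI[of _ "y#xs"] conjI allI impI)
      fix i assume "Suc i < length (y#xs)"
      then show "adj E ((y#xs)!i) ((y#xs)!Suc i)"
        using ad y unfolding N_def by (cases i) auto
    qed (use False xs y N_def in auto)
    then show False using mx by fastforce
  next
    case True
    then obtain j where j: "j < length xs" "xs!j = y" by (auto simp: in_set_conv_nth)
    have "j \<noteq> 0"
    proof
      assume "j = 0" then have "adj E y y" using y j unfolding N_def by auto
      then show False using adj_irrefl by metis
    qed
    moreover have "j \<noteq> 1" using y j by auto
    ultimately have j2: "2 \<le> j" by auto
    have "is_cycle V E (take (Suc j) xs)"
      unfolding is_cycle_def
    proof (intro conjI allI impI)
      show "3 \<le> length (take (Suc j) xs)" using j j2 by auto
      show "distinct (take (Suc j) xs)" using xs by auto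
      show "set (take (Suc j) xs) \<subseteq> V" using xs(4) set_take_subset by (rule order.trans[rotated])
      fix i assume "Suc i < length (take (Suc j) xs)"
      then show "adj E (take (Suc j) xs ! i) (take (Suc j) xs ! Suc i)" using ad by simp
    next
      have "last (take (Suc j) xs) = y" using j by (simp add: take_Suc_conv_app_nth)
      moreover have "hd (take (Suc j) xs) = xs!0" using j xs(2) by (simp add: hd_conv_nth)
      ultimately show "adj E (last (take (Suc j) xs)) (hd (take (Suc j) xs))"
        using y unfolding N_def by auto
    qed
    then show False using nc by blast
  qed
qed

lemma deg_small: "finite A \<Longrightarrow> a \<in> A \<Longrightarrow> degree A E a \<le> card A - 1"
proof -
  assume "finite A" "a \<in> A"
  have "{u\<in>A. adj E u a} \<subseteq> A - {a}" using adj_irrefl by fastforce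
  then have "degree A E a \<le> card (A - {a})" unfolding degree_def
    using \<open>finite A\<close> by (intro card_mono) auto
  then show ?thesis using \<open>a \<in> A\<close> \<open>finite A\<close> by (simp add: card_Diff_singleton)
qed

lemma combine:
  assumes F': "dissociation_set V' E F'" and fin: "finite V"
    and sub: "V' \<subseteq> V" "A \<subseteq> V" "A \<inter> V' = {}"
    and noadj: "\<forall>a\<in>A. \<forall>x\<in>V'. \<not> adj E x a"
    and dA: "\<forall>a\<in>A. degree A E a \<le> 1"
  shows "dissociation_set V E (F' \<union> A) \<and> card (F' \<union> A) = card F' + card A"
proof -
  have FV: "F' \<subseteq> V'" using F' unfolding dissociation_set_def by auto
  have finA: "finite A" using fin sub(2) by (rule finite_subset[rotated])
  have finF: "finite F'" using fin sub(1) FV by (meson finite_subset)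
  have c: "card (F' \<union> A) = card F' + card A"
    using finA finF FV sub(3) by (intro card_Un_disjoint) auto
  have s: "F' \<union> A \<subseteq> V" using FV sub by auto
  have d: "degree (F' \<union> A) E v \<le> 1" if v: "v \<in> F' \<union> A" for v
  proof (cases "v \<in> F'")
    case True
    have "{u\<in>F' \<union> A. adj E u v} \<subseteq> {u\<in>F'. adj E u v}"
    proof
      fix u assume u: "u \<in> {u\<in>F' \<union> A. adj E u v}"
      have "u \<notin> A" proof
        assume "u \<in> A" then have "\<not> adj E v u" using noadj True FV by blast
        then show False using u adj_sym[of E u v] by simp
      qed
      then show "u \<in> {u\<in>F'. adj E u v}" using u by blast
    qed
    then have "degree (F' \<union> A) E v \<le> degree F' E v" unfolding degree_def
      using finF by (intro card_mono) auto
    also have "\<dots> \<le> 1" using F' True unfolding dissociation_set_def by auto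
    finally show ?thesis .
  next
    case False
    then have vA: "v \<in> A" using v by auto
    have "{u\<in>F' \<union> A. adj E u v} \<subseteq> {u\<in>A. adj E u v}"
    proof
      fix u assume u: "u \<in> {u\<in>F' \<union> A. adj E u v}"
      have "u \<notin> F'" proof
        assume "u \<in> F'" then have "\<not> adj E u v" using noadj vA FV by blast
        then show False using u by simp
      qed
      then show "u \<in> {u\<in>A. adj E u v}" using u by blast
    qed
    then have "degree (F' \<union> A) E v \<le> degree A E v" unfolding degree_def
      using finA by (intro card_mono) auto
    also have "\<dots> \<le> 1" using dA vA by auto
    finally show ?thesis .
  qed
  show ?thesis using c s d unfolding dissociation_set_def by auto
qed
lemma lower:
  "finite V \<Longrightarrow> \<not>(\<exists>xs. is_cycle V E xs) \<Longrightarrow> \<forall>v\<in>V. degree V E v \<le> 3 \<Longrightarrow>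
   \<exists>F. dissociation_set V E F \<and> 2 * card V \<le> 3 * card F"
proof (induction "card V" arbitrary: V rule: less_induct)
  case less
  note fin = less.prems(1)
  define N where "N v = {u\<in>V. adj E u v}" for v
  have finN: "finite (N v)" for v using fin unfolding N_def by auto
  have degN: "degree V E v = card (N v)" for v unfolding N_def degree_def by simp
  have step: "\<exists>F. dissociation_set V E F \<and> 2 * card V \<le> 3 * card F"
    if R: "R \<subseteq> V" "R \<noteq> {}" "A \<subseteq> R" and na: "\<forall>a\<in>A. \<forall>x\<in>V-R. \<not> adj E x a"
      and dA: "\<forall>a\<in>A. degree A E a \<le> 1" and cR: "2 * card R \<le> 3 * card A" for R A
  proof -
    have finR: "finite R" using fin R(1) by (rule finite_subset[rotated])
    have lt: "card (V - R) < card V"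
    proof (rule psubset_card_mono[OF fin])
      show "V - R \<subset> V" using R(1,2) by blast
    qed
    have "\<exists>F. dissociation_set (V-R) E F \<and> 2 * card (V-R) \<le> 3 * card F"
    proof (rule less.hyps[OF lt])
      show "finite (V - R)" using fin by auto
      show "\<not> (\<exists>xs. is_cycle (V - R) E xs)" using less.prems(2) cycle_mono[of "V-R" E _ V] by blast
      show "\<forall>v\<in>V - R. degree (V - R) E v \<le> 3"
        using less.prems(3) degree_mono[OF fin, of "V-R"] by (meson Diff_iff Diff_subset order_trans)
    qed
    then obtain F' where F': "dissociation_set (V-R) E F'" "2 * card (V-R) \<le> 3 * card F'" by blast
    have c: "dissociation_set V E (F' \<union> A) \<and> card (F' \<union> A) = card F' + card A"
      using combine[OF F'(1) fin, of A] R na dA by auto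
    have "card V = card (V - R) + card R"
      using card_Diff_subset[OF finR R(1)] card_mono[OF fin R(1)] by linarith
    then show ?thesis using c F'(2) cR by (intro exI[of _ "F' \<union> A"]) auto
  qed
  have inN: "x \<in> N v \<longleftrightarrow> x \<in> V \<and> adj E x v" for x v unfolding N_def by simp
  show ?case
  proof (cases "V = {}")
    case True then show ?thesis by (intro exI[of _ "{}"]) (auto simp: dissociation_set_def)
  next
    case Vne: False
    show ?thesis
    proof (cases "\<exists>v\<in>V. degree V E v = 0")
      case True
      then obtain v where v: "v \<in> V" "degree V E v = 0" by blast
      have Nv: "N v = {}" using v(2) degN[of v] finN[of v] by simp
      show ?thesis
      proof (rule step[of "{v}" "{v}"])
        show "{v} \<subseteq> V" using v by simp
        show "\<forall>a\<in>{v}. \<forall>x\<in>V-{v}. \<not> adj E x a" using Nv inN by blast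
        show "\<forall>a\<in>{v}. degree {v} E a \<le> 1" using deg_small[of "{v}" v E] by simp
      qed auto
    next
      case nz: False
      have leafN: "N v = {u}" if "degree V E v = 1" "u \<in> N v" for v u
      proof -
        have "card (N v) = 1" using that degN by simp
        then obtain x where "N v = {x}" by (rule card_1_singletonE)
        then show ?thesis using that(2) by simp
      qed
      have symN: "v \<in> N u" if "u \<in> N v" "v \<in> V" for u v
        using that inN adj_sym[of E u v] by simp
      show ?thesis
      proof (cases "\<exists>u v. v \<in> V \<and> u \<in> N v \<and> degree V E v = 1 \<and> degree V E u = 1")
        case True
        then obtain u v where uv: "v \<in> V" "u \<in> N v" "degree V E v = 1" "degree V E u = 1" by blast
        have uV: "u \<in> V" using uv inN by blast
        have "adj E u v" using uv inN by blast
        then have "u \<noteq> v" using adj_irrefl by metis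
        have Nv: "N v = {u}" using leafN uv by blast
        have Nu: "N u = {v}" using leafN[OF uv(4) symN[OF uv(2) uv(1)]] .
        show ?thesis
        proof (rule step[of "{u,v}" "{u,v}"])
          show "{u, v} \<subseteq> V" using uV uv by simp
          show "\<forall>a\<in>{u, v}. \<forall>x\<in>V - {u, v}. \<not> adj E x a"
          proof (intro ballI notI)
            fix a x assume a: "a \<in> {u,v}" and x: "x \<in> V - {u,v}" and ad: "adj E x a"
            have "x \<in> N a" using x ad inN by blast
            then show False using a x Nu Nv by auto
          qed
          show "\<forall>a\<in>{u, v}. degree {u, v} E a \<le> 1"
            using deg_small[of "{u,v}" _ E] \<open>u \<noteq> v\<close> by auto
          show "2 * card {u, v} \<le> 3 * card {u, v}" by simp
        qed auto
      next
        case nB: False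
        define L where "L = {v\<in>V. degree V E v = 1}"
        have VL: "V - L \<noteq> {}"
        proof
          assume e: "V - L = {}"
          obtain v where v: "v \<in> V" using Vne by blast
          then have dv: "degree V E v = 1" using e L_def by blast
          then have "card (N v) = 1" using degN by simp
          then obtain u where u: "N v = {u}" by (rule card_1_singletonE)
          then have "u \<in> V" using inN by blast
          then have "degree V E u = 1" using e L_def by blast
          then show False using nB v dv u by blast
        qed
        have finVL: "finite (V - L)" using fin by simp
        have ncVL: "\<not> (\<exists>xs. is_cycle (V - L) E xs)" using less.prems(2) cycle_mono[of "V-L" E _ V] by blast
        obtain u where u: "u \<in> V - L" "degree (V-L) E u \<le> 1"
          using forest_leaf[OF finVL VL ncVL] by blast
        have uV: "u \<in> V" using u by simp
        have du: "2 \<le> card (N u)"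
        proof -
          have "degree V E u \<noteq> 0" using nz uV by auto
          moreover have "degree V E u \<noteq> 1" using u L_def by blast
          ultimately show ?thesis using degN by simp
        qed
        define NL where "NL = N u \<inter> L"
        define NN where "NN = N u - L"
        have finNL: "finite NL" "finite NN" using finN NL_def NN_def by auto
        have cN: "card (N u) = card NL + card NN"
        proof -
          have "N u = NL \<union> NN" "NL \<inter> NN = {}" unfolding NL_def NN_def by auto
          then show ?thesis using finNL card_Un_disjoint by metis
        qed
        have cNN: "card NN \<le> 1"
        proof -
          have "NN = {x\<in>V-L. adj E x u}" unfolding NN_def N_def by auto
          then show ?thesis using u(2) unfolding degree_def by simp
        qed
        have NLleaf: "N a = {u}" if "a \<in> NL" for a
        proof -
          have "a \<in> V" "a \<in> N u" "degree V E a = 1" using that NL_def L_def inN by auto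
          then show ?thesis using leafN symN[of a u] uV by blast
        qed
        have uNL: "u \<notin> NL" using u NL_def by blast
        have NLV: "NL \<subseteq> V" using NL_def L_def by blast
        show ?thesis
        proof (cases "2 \<le> card NL")
          case True
          show ?thesis
          proof (rule step[of "insert u NL" NL])
            show "insert u NL \<subseteq> V" using uV NLV by simp
            show "\<forall>a\<in>NL. \<forall>x\<in>V - insert u NL. \<not> adj E x a"
            proof (intro ballI notI)
              fix a x assume a: "a \<in> NL" and x: "x \<in> V - insert u NL" and ad: "adj E x a"
              have "x \<in> N a" using x ad inN by blast
              then show False using NLleaf[OF a] x by auto
            qed
            show "\<forall>a\<in>NL. degree NL E a \<le> 1"
            proof
              fix a assume a: "a \<in> NL"
              have "{w\<in>NL. adj E w a} = {}"
              proof (rule ccontr)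
                assume "{w\<in>NL. adj E w a} \<noteq> {}"
                then obtain w where w: "w \<in> NL" "adj E w a" by blast
                then have "w \<in> N a" using NLV inN by blast
                then have "w = u" using NLleaf[OF a] by simp
                then show False using w uNL by simp
              qed
              then show "degree NL E a \<le> 1" unfolding degree_def by (metis card.empty zero_le_one)
            qed
            show "2 * card (insert u NL) \<le> 3 * card NL" using True uNL finNL by simp
          qed auto
        next
          case False
          have c1: "card NL = 1" "card NN = 1" using False cN cNN du by auto
          obtain a where a: "NL = {a}" using c1(1) by (rule card_1_singletonE)
          obtain w where w: "NN = {w}" using c1(2) by (rule card_1_singletonE)
          have Nu: "N u = {a, w}" using a w NL_def NN_def by auto
          have aL: "a \<in> L" "w \<notin> L" using a w NL_def NN_def by auto
          have "a \<noteq> u" using aL u by auto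
          moreover have "w \<noteq> u"
          proof
            assume "w = u" then have "adj E u u" using Nu inN by blast
            then show False using adj_irrefl by metis
          qed
          moreover have "a \<noteq> w" using aL by auto
          moreover have Na: "N a = {u}" using NLleaf a by simp
          moreover have "a \<in> V" "w \<in> V" using Nu inN by auto
          ultimately show ?thesis
          proof (intro step[of "{a,u,w}" "{a,u}"])
            show "\<forall>aa\<in>{a, u}. \<forall>x\<in>V - {a, u, w}. \<not> adj E x aa"
            proof (intro ballI notI)
              fix b x assume b: "b \<in> {a,u}" and x: "x \<in> V - {a,u,w}" and ad: "adj E x b"
              have "x \<in> N b" using x ad inN by blast
              then show False using b x Nu Na by auto
            qed
          qed (use uV deg_small[of "{a,u}" _ E] in auto)
        qed
      qed
    qed
  qed
qed

lemma sg_fin: "simple_graph V E \<Longrightarrow> finite V"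
  unfolding simple_graph_def by (rule conjunct1)

lemma sg_edge: "simple_graph V E \<Longrightarrow> e \<in> E \<Longrightarrow> \<exists>a b. a \<noteq> b \<and> a \<in> V \<and> b \<in> V \<and> e = {a, b}"
  unfolding simple_graph_def by (drule conjunct2) (erule bspec)

lemma sg_EP: "simple_graph V E \<Longrightarrow> E \<subseteq> Pow V"
proof
  fix e assume "simple_graph V E" "e \<in> E"
  then obtain a b where "a \<in> V" "b \<in> V" "e = {a, b}" using sg_edge by metis
  then show "e \<in> Pow V" by simp
qed

lemma sg_finE: "simple_graph V E \<Longrightarrow> finite E"
  using sg_EP[of V E] sg_fin[of V E] finite_subset[of E "Pow V"] by simp

lemma edges_ge:
  assumes sg: "simple_graph V E" and ne: "V \<noteq> {}" and cg: "connected_graph V E"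
  shows "card V \<le> card E + 1"
proof -
  define R where "R = (\<lambda>x y. x \<in> V \<and> y \<in> V \<and> adj E x y)"
  have fin: "finite V" using sg by (rule sg_fin)
  have finE: "finite E" using sg by (rule sg_finE)
  obtain r where r: "r \<in> V" using ne by blast
  have reach: "\<exists>n. (R ^^ n) r v" if "v \<in> V" for v
  proof -
    have "R\<^sup>*\<^sup>* r v" using cg r that unfolding connected_graph_def R_def by blast
    then show ?thesis by (rule rtranclp_imp_relpowp)
  qed
  define d where "d v = (LEAST n. (R ^^ n) r v)" for v
  have par: "\<exists>y. R y v \<and> d y < d v" if "v \<in> V" "v \<noteq> r" for v
  proof -
    have Rd: "(R ^^ d v) r v" unfolding d_def using reach[OF that(1)] by (rule LeastI_ex)
    have "d v \<noteq> 0"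
    proof
      assume "d v = 0" then have "r = v" using Rd by simp
      then show False using that by simp
    qed
    then obtain m where m: "d v = Suc m" by (cases "d v") auto
    then have "(R ^^ Suc m) r v" using Rd by simp
    then obtain y where y: "(R ^^ m) r y" "R y v" by (rule relpowp_Suc_E)
    have "d y \<le> m" unfolding d_def using y(1) by (rule Least_le)
    then show ?thesis using y m by auto
  qed
  define p where "p v = (SOME y. R y v \<and> d y < d v)" for v
  have pp: "R (p v) v \<and> d (p v) < d v" if "v \<in> V" "v \<noteq> r" for v
    unfolding p_def using par[OF that] by (rule someI_ex)
  define f where "f v = {p v, v}" for v
  have inj: "inj_on f (V - {r})"
  proof (rule inj_onI)
    fix v w assume v: "v \<in> V - {r}" and w: "w \<in> V - {r}" and eq: "f v = f w"
    show "v = w"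
    proof (rule ccontr)
      assume "v \<noteq> w"
      then have "p v = w" "v = p w" using eq unfolding f_def by (auto simp: doubleton_eq_iff)
      then show False using pp[of v] pp[of w] v w by auto
    qed
  qed
  have img: "f ` (V - {r}) \<subseteq> E"
  proof
    fix e assume "e \<in> f ` (V - {r})"
    then obtain v where v: "v \<in> V - {r}" "e = f v" by blast
    then have "adj E (p v) v" using pp[of v] R_def by auto
    then show "e \<in> E" using v unfolding f_def adj_def by simp
  qed
  have "card (V - {r}) \<le> card E"
    using card_inj_on_le[OF inj img finE] .
  then show ?thesis using r fin by (simp add: card_Diff_singleton)
qed

lemma edges_le:
  assumes sg: "simple_graph V E" and F: "dissociation_set V E F"
    and deg: "\<forall>v\<in>V. degree V E v \<le> 3"
  shows "2 * card E \<le> card F + 6 * card (V - F)"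
proof -
  have fin: "finite V" using sg by (rule sg_fin)
  have FV: "F \<subseteq> V" using F unfolding dissociation_set_def by (rule conjunct1)
  have finF: "finite F" using fin FV by (rule finite_subset[rotated])
  have finE: "finite E" using sg by (rule sg_finE)
  have edge: "\<exists>a b. a \<noteq> b \<and> a \<in> V \<and> b \<in> V \<and> e = {a, b}" if "e \<in> E" for e
    using sg that by (rule sg_edge)
  define EF where "EF = {e\<in>E. e \<subseteq> F}"
  define ES where "ES s = {e\<in>E. s \<in> e}" for s
  have cover: "E \<subseteq> EF \<union> (\<Union>s\<in>V-F. ES s)"
  proof
    fix e assume e: "e \<in> E"
    then obtain a b where ab: "a \<noteq> b" "a \<in> V" "b \<in> V" "e = {a, b}" using edge by blast
    show "e \<in> EF \<union> (\<Union>s\<in>V-F. ES s)"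
    proof (cases "a \<in> F \<and> b \<in> F")
      case True then show ?thesis using e ab EF_def by auto
    next
      case False then show ?thesis using e ab ES_def by auto
    qed
  qed
  have finEF: "finite EF" using finE EF_def by simp
  have cES: "card (ES s) \<le> 3" if "s \<in> V" for s
  proof -
    have "ES s \<subseteq> (\<lambda>u. {u, s}) ` {u\<in>V. adj E u s}"
    proof
      fix e assume "e \<in> ES s"
      then have e: "e \<in> E" "s \<in> e" using ES_def by auto
      then obtain a b where ab: "a \<noteq> b" "a \<in> V" "b \<in> V" "e = {a, b}" using edge by blast
      show "e \<in> (\<lambda>u. {u, s}) ` {u\<in>V. adj E u s}"
      proof (cases "s = a")
        case True
        then have "e = {b, s}" "adj E b s" using ab e by (auto simp: adj_def insert_commute)
        then show ?thesis using ab by blast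
      next
        case False
        then have "s = b" using e ab by auto
        then have "e = {a, s}" "adj E a s" using ab e by (auto simp: adj_def)
        then show ?thesis using ab by blast
      qed
    qed
    then have "card (ES s) \<le> card ((\<lambda>u. {u, s}) ` {u\<in>V. adj E u s})"
      using fin by (intro card_mono) auto
    also have "\<dots> \<le> card {u\<in>V. adj E u s}" by (rule card_image_le) (use fin in simp)
    also have "\<dots> \<le> 3" using deg that unfolding degree_def by auto
    finally show ?thesis .
  qed
  have finU: "finite (\<Union>s\<in>V-F. ES s)" by (rule finite_subset[OF _ finE]) (auto simp: ES_def)
  have "card E \<le> card (EF \<union> (\<Union>s\<in>V-F. ES s))"
    using cover finEF finU by (intro card_mono) auto
  also have "\<dots> \<le> card EF + card (\<Union>s\<in>V-F. ES s)" by (rule card_Un_le)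
  also have "card (\<Union>s\<in>V-F. ES s) \<le> (\<Sum>s\<in>V-F. card (ES s))" using fin by (intro card_UN_le) simp
  also have "\<dots> \<le> (\<Sum>s\<in>V-F. 3)" using cES by (intro sum_mono) simp
  also have "\<dots> = 3 * card (V - F)" by simp
  finally have c1: "card E \<le> card EF + 3 * card (V - F)" by simp
  have two: "card e = 2" if "e \<in> EF" for e
    using that edge[of e] EF_def by (auto simp: card_insert_if)
  have disj: "pairwise disjnt EF"
  proof (rule pairwiseI)
    fix e1 e2 assume e1: "e1 \<in> EF" and e2: "e2 \<in> EF" and ne: "e1 \<noteq> e2"
    show "disjnt e1 e2"
    proof (rule ccontr)
      assume "\<not> disjnt e1 e2"
      then obtain x where x: "x \<in> e1" "x \<in> e2" unfolding disjnt_def by blast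
      have oth: "\<exists>y. e = {x, y} \<and> y \<noteq> x" if ee: "e \<in> E" "x \<in> e" for e
      proof -
        obtain a b where ab: "a \<noteq> b" "e = {a, b}" using edge[OF ee(1)] by blast
        then show ?thesis using ee(2) by (auto simp: insert_commute)
      qed
      obtain y1 where y1: "e1 = {x, y1}" "y1 \<noteq> x" using oth e1 x EF_def by blast
      obtain y2 where y2: "e2 = {x, y2}" "y2 \<noteq> x" using oth e2 x EF_def by blast
      have "y1 \<noteq> y2" using y1 y2 ne by auto
      have sF: "e1 \<subseteq> F" "e2 \<subseteq> F" "e1 \<in> E" "e2 \<in> E" using e1 e2 EF_def by auto
      have "{y1, y2} \<subseteq> {u\<in>F. adj E u x}"
        using sF y1 y2 by (auto simp: adj_def insert_commute)
      then have "card {y1, y2} \<le> card {u\<in>F. adj E u x}" using finF by (intro card_mono) auto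
      moreover have "card {u\<in>F. adj E u x} \<le> 1" using F sF x y1 unfolding dissociation_set_def degree_def by auto
      ultimately show False using \<open>y1 \<noteq> y2\<close> by simp
    qed
  qed
  have "card (\<Union>EF) = sum card EF"
    using disj by (rule card_Union_disjoint) (use finF EF_def finite_subset in blast)
  also have "\<dots> = 2 * card EF" using two by simp
  finally have "2 * card EF = card (\<Union>EF)" by simp
  also have "\<dots> \<le> card F" using finF EF_def by (intro card_mono) auto
  finally show ?thesis using c1 by linarith
qed

lemma dn_props:
  assumes fin: "finite V"
  shows "\<And>F. dissociation_set V E F \<Longrightarrow> card F \<le> dissociation_number V E"
    and "\<exists>F. dissociation_set V E F \<and> card F = dissociation_number V E"
proof -
  define S where "S = {card F | F. dissociation_set V E F}"
  have "S \<subseteq> card ` Pow V" unfolding S_def dissociation_set_def by auto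
  then have finS: "finite S" using fin finite_subset by blast
  have "0 \<in> S" unfolding S_def dissociation_set_def degree_def
    by (auto intro!: exI[of _ "{}"])
  then have neS: "S \<noteq> {}" by blast
  show "card F \<le> dissociation_number V E" if "dissociation_set V E F" for F
    unfolding dissociation_number_def S_def[symmetric] using finS that S_def by (intro Max_ge) auto
  have "Max S \<in> S" using finS neS by (rule Max_in)
  then show "\<exists>F. dissociation_set V E F \<and> card F = dissociation_number V E"
    unfolding dissociation_number_def S_def[symmetric] unfolding S_def by auto
qed

lemma tree_bounds:
  assumes T: "subcubic_tree V E"
  shows "2 * card V \<le> 3 * dissociation_number V E \<and> 5 * dissociation_number V E \<le> 4 * card V + 2"
proof -
  have sg: "simple_graph V E" and ne: "V \<noteq> {}" and cg: "connected_graph V E"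
    and nc: "\<not> (\<exists>xs. is_cycle V E xs)" and deg: "\<forall>v\<in>V. degree V E v \<le> 3"
    using T unfolding subcubic_tree_def is_tree_def by auto
  have fin: "finite V" using sg by (rule sg_fin)
  obtain F where F: "dissociation_set V E F" "2 * card V \<le> 3 * card F"
    using lower[OF fin nc deg] by blast
  have l: "2 * card V \<le> 3 * dissociation_number V E" using F dn_props(1)[OF fin, of E F] by linarith
  obtain G where G: "dissociation_set V E G" "card G = dissociation_number V E"
    using dn_props(2)[OF fin, of E] by blast
  have GV: "G \<subseteq> V" using G(1) unfolding dissociation_set_def by (rule conjunct1)
  have cd: "card (V - G) = card V - card G" using GV fin finite_subset by (metis card_Diff_subset)
  have cg': "card G \<le> card V" using GV fin by (rule card_mono[rotated])
  have "card V \<le> card E + 1" using edges_ge[OF sg ne cg] .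
  moreover have "2 * card E \<le> card G + 6 * card (V - G)" using edges_le[OF sg G(1) deg] .
  ultimately have "5 * card G \<le> 4 * card V + 2" using cd cg' by linarith
  then show ?thesis using l G(2) by simp
qed

definition "P3V = {0, 1, 2 :: nat}"
definition "P3E = {{0, 1}, {1, 2 :: nat}}"

lemma P3_tree: "subcubic_tree P3V P3E"
proof -
  have sg: "simple_graph P3V P3E" unfolding simple_graph_def
  proof (intro conjI ballI)
    show "finite P3V" by (simp add: P3V_def)
    fix e assume "e \<in> P3E"
    then have "e = {0,1} \<or> e = {1,2}" by (simp add: P3E_def)
    then show "\<exists>u v. u \<noteq> v \<and> u \<in> P3V \<and> v \<in> P3V \<and> e = {u, v}"
    proof (elim disjE)
      assume "e = {0,1}" then show ?thesis by (intro exI[of _ 0] exI[of _ 1]) (simp add: P3V_def)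
    next
      assume "e = {1,2}" then show ?thesis by (intro exI[of _ 1] exI[of _ 2]) (simp add: P3V_def)
    qed
  qed
  have nc: "\<not> is_cycle P3V P3E xs" for xs
  proof
    assume c: "is_cycle P3V P3E xs"
    have "length xs = card (set xs)" using c unfolding is_cycle_def by (simp add: distinct_card)
    also have "\<dots> \<le> card P3V" using c unfolding is_cycle_def by (intro card_mono) (simp_all add: P3V_def)
    also have "\<dots> = 3" by (simp add: P3V_def)
    finally have "length xs \<le> 3" .
    then have l3: "length xs = 3" using c unfolding is_cycle_def by simp
    then obtain a b cc where xs: "xs = [a, b, cc]"
      by (metis (no_types, lifting) length_0_conv length_Suc_conv numeral_3_eq_3)
    have "adj P3E a b" "adj P3E b cc" "adj P3E cc a" "distinct [a,b,cc]" "{a,b,cc} \<subseteq> P3V"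
      using c unfolding is_cycle_def xs by (auto dest: spec[of _ 0] spec[of _ 1])
    then show False unfolding adj_def P3E_def P3V_def by (auto simp: doubleton_eq_iff)
  qed
  define R where "R = (\<lambda>x y. x \<in> P3V \<and> y \<in> P3V \<and> adj P3E x y)"
  have e: "R 0 1" "R 1 0" "R 1 2" "R 2 1" unfolding R_def P3V_def P3E_def adj_def
    by (auto simp: insert_commute)
  have cg: "connected_graph P3V P3E" unfolding connected_graph_def R_def[symmetric]
  proof (intro ballI)
    fix u v assume "u \<in> P3V" "v \<in> P3V"
    then show "R\<^sup>*\<^sup>* u v" unfolding P3V_def
      using e by (auto intro: rtranclp.rtrancl_into_rtrancl converse_rtranclp_into_rtranclp)
  qed
  have deg: "degree P3V P3E v \<le> 3" for v
  proof -
    have "degree P3V P3E v \<le> card P3V" unfolding degree_def by (rule card_mono) (auto simp: P3V_def)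
    then show ?thesis by (simp add: P3V_def)
  qed
  show ?thesis unfolding subcubic_tree_def is_tree_def using sg nc cg deg by (auto simp: P3V_def)
qed

lemma P3_dn: "dissociation_number P3V P3E = 2"
proof -
  have fin: "finite P3V" by (simp add: P3V_def)
  have "dissociation_set P3V P3E {0,1}" unfolding dissociation_set_def
    using deg_small[of "{0,1::nat}" _ P3E] by (auto simp: P3V_def)
  then have ge: "2 \<le> dissociation_number P3V P3E" using dn_props(1)[OF fin] by fastforce
  obtain F where F: "dissociation_set P3V P3E F" "card F = dissociation_number P3V P3E"
    using dn_props(2)[OF fin] by blast
  have FV: "F \<subseteq> P3V" using F(1) unfolding dissociation_set_def by (rule conjunct1)
  have "card F \<le> 3" using card_mono[OF fin FV] by (simp add: P3V_def)
  moreover have "card F \<noteq> 3"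
  proof
    assume "card F = 3"
    then have "F = P3V" using card_subset_eq[OF fin FV] by (simp add: P3V_def)
    moreover have "{u \<in> P3V. adj P3E u 1} = {0, 2}"
      unfolding P3V_def P3E_def adj_def by (auto simp: doubleton_eq_iff)
    ultimately have "degree F P3E 1 = 2" unfolding degree_def by simp
    moreover have "1 \<in> F" using \<open>F = P3V\<close> by (simp add: P3V_def)
    ultimately show False using F(1) unfolding dissociation_set_def by fastforce
  qed
  ultimately show ?thesis using ge F(2) by linarith
qed

definition "K2V = {0, 1 :: nat}"
definition "K2E = {{0, 1 :: nat}}"

lemma K2_tree: "subcubic_tree K2V K2E"
proof -
  have sg: "simple_graph K2V K2E" unfolding simple_graph_def K2V_def K2E_def by auto
  have nc: "\<not> is_cycle K2V K2E xs" for xs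
  proof
    assume c: "is_cycle K2V K2E xs"
    have "length xs = card (set xs)" using c unfolding is_cycle_def by (simp add: distinct_card)
    also have "\<dots> \<le> card K2V" using c unfolding is_cycle_def by (intro card_mono) (simp_all add: K2V_def)
    finally have "length xs \<le> card K2V" .
    then show False using c unfolding is_cycle_def by (simp add: K2V_def)
  qed
  define R where "R = (\<lambda>x y. x \<in> K2V \<and> y \<in> K2V \<and> adj K2E x y)"
  have e: "R 0 1" "R 1 0" unfolding R_def K2V_def K2E_def adj_def
    by (auto simp: insert_commute)
  have cg: "connected_graph K2V K2E" unfolding connected_graph_def R_def[symmetric]
  proof (intro ballI)
    fix u v assume "u \<in> K2V" "v \<in> K2V"
    then show "R\<^sup>*\<^sup>* u v" unfolding K2V_def using e by auto
  qed
  have deg: "degree K2V K2E v \<le> 3" for v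
  proof -
    have "degree K2V K2E v \<le> card K2V" unfolding degree_def by (rule card_mono) (auto simp: K2V_def)
    then show ?thesis by (simp add: K2V_def)
  qed
  show ?thesis unfolding subcubic_tree_def is_tree_def using sg nc cg deg by (auto simp: K2V_def)
qed

lemma K2_dn: "dissociation_number K2V K2E = 2"
proof -
  have fin: "finite K2V" by (simp add: K2V_def)
  have "dissociation_set K2V K2E K2V" unfolding dissociation_set_def
    using deg_small[of "K2V" _ K2E] by (auto simp: K2V_def)
  then have ge: "2 \<le> dissociation_number K2V K2E" using dn_props(1)[OF fin] by (fastforce simp: K2V_def)
  obtain F where F: "dissociation_set K2V K2E F" "card F = dissociation_number K2V K2E"
    using dn_props(2)[OF fin] by blast
  have FV: "F \<subseteq> K2V" using F(1) unfolding dissociation_set_def by (rule conjunct1)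
  have "card F \<le> 2" using card_mono[OF fin FV] by (simp add: K2V_def)
  then show ?thesis using ge F(2) by linarith
qed

theorem theorem2p4:
  shows "(\<forall>(V :: 'a set) E. subcubic_tree V E \<longrightarrow>
            2 * real (card V) / 3 \<le> real (dissociation_number V E) \<and>
            real (dissociation_number V E) \<le> (4 * real (card V) + 2) / 5)
       \<and> (\<exists>(V :: nat set) E. subcubic_tree V E \<and>
            real (dissociation_number V E) = 2 * real (card V) / 3)
       \<and> (\<exists>(V :: nat set) E. subcubic_tree V E \<and>
            real (dissociation_number V E) = (4 * real (card V) + 2) / 5)"
proof (intro conjI allI impI)
  fix V :: "'a set" and E assume T: "subcubic_tree V E"
  have b: "2 * card V \<le> 3 * dissociation_number V E" "5 * dissociation_number V E \<le> 4 * card V + 2"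
    using tree_bounds[OF T] by auto
  have "2 * real (card V) \<le> 3 * real (dissociation_number V E)" using b(1) by linarith
  then show "2 * real (card V) / 3 \<le> real (dissociation_number V E)" by simp
  have "5 * real (dissociation_number V E) \<le> 4 * real (card V) + 2" using b(2) by linarith
  then show "real (dissociation_number V E) \<le> (4 * real (card V) + 2) / 5" by simp
next
  show "\<exists>(V :: nat set) E. subcubic_tree V E \<and> real (dissociation_number V E) = 2 * real (card V) / 3"
    using P3_tree P3_dn by (intro exI[of _ P3V] exI[of _ P3E]) (simp add: P3V_def)
next
  show "\<exists>(V :: nat set) E. subcubic_tree V E \<and> real (dissociation_number V E) = (4 * real (card V) + 2) / 5"
    using K2_tree K2_dn by (intro exI[of _ K2V] exI[of _ K2E]) (simp add: K2V_def)
qed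

end
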